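(* Let $r$ be a positive integer. For all sufficiently large $n\in F_r$, $P_1(n)^4\nmid n$.
   Context: For a positive integer $r$, $S_r$ is the multiplicative arithmetic function with $S_r(p^{\alpha})=0$ if $p\leq r$ and $S_r(p^{\alpha})=p^{\alpha-1}(p-r)$ if $p>r$, for all primes $p$ and positive integers $\alpha$. $B_r=\{n\in\mathbb{N}: S_r(n)>0\}$ (positive integers whose smallest prime factor exceeds $r$, together with $1$). $F_r$ is the set of $n\in B_r$ such that $S_r(n)<S_r(m)$ for all $m\in B_r$ with $m>n$. $P_1(n)$ denotes the largest prime divisor of $n$. *)

theory Defs
  imports "HOL-Computational_Algebra.Primes"
begin

definition S :: "nat \<Rightarrow> nat \<Rightarrow> int" where
  "S r n = (\<Prod>p\<in>prime_factors n.
      (if p \<le> r then 0 else int p ^ (multiplicity p n - 1) * (int p - int r)))"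

definition B :: "nat \<Rightarrow> nat set" where
  "B r = {n. n > 0 \<and> S r n > 0}"

definition F :: "nat \<Rightarrow> nat set" where
  "F r = {n \<in> B r. \<forall>m \<in> B r. m > n \<longrightarrow> S r n < S r m}"

definition P1 :: "nat \<Rightarrow> nat" where
  "P1 n = (if n \<le> 1 then 1 else Max (prime_factors n))"

end

theory Submission
  imports Defs Complex_Main
begin


lemma Suc_div_split: "(d::nat) > 0 \<Longrightarrow> Suc k div d = k div d + (if d dvd Suc k then 1 else 0)"
  by (simp add: div_Suc dvd_eq_mod_eq_0)

lemma mult_le_self: assumes "prime (p::nat)" "k > 0" shows "multiplicity p k \<le> k"
proof -
  have "p ^ multiplicity p k dvd k" by (rule multiplicity_dvd)
  hence "p ^ multiplicity p k \<le> k" using assms by (simp add: dvd_imp_le)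
  moreover have "multiplicity p k < p ^ multiplicity p k"
  proof -
    have "(2::nat) ^ multiplicity p k \<le> p ^ multiplicity p k"
      using assms prime_ge_2_nat by (intro power_mono) auto
    thus ?thesis using less_exp[of "multiplicity p k"] by linarith
  qed
  ultimately show ?thesis by simp
qed

lemma legendre:
  assumes p: "prime (p::nat)"
  shows "multiplicity p (fact k :: nat) = (\<Sum>i\<in>{1..k}. k div p^i)"
proof (induction k)
  case 0 then show ?case by simp
next
  case (Suc k)
  have p1: "p > 1" using p prime_gt_1_nat by blast
  have "multiplicity p (fact (Suc k) :: nat) = multiplicity p (Suc k) + multiplicity p (fact k :: nat)"
  proof -
    have "(fact (Suc k) :: nat) = Suc k * fact k" by simp
    moreover have "multiplicity p (Suc k * fact k :: nat) = multiplicity p (Suc k) + multiplicity p (fact k :: nat)"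
      by (rule prime_elem_multiplicity_mult_distrib) (use p in auto)
    ultimately show ?thesis by metis
  qed
  also have "multiplicity p (Suc k) = card {i\<in>{1..Suc k}. p^i dvd Suc k}"
  proof -
    have "{i\<in>{1..Suc k}. p^i dvd Suc k} = {1..multiplicity p (Suc k)}"
      using mult_le_self[OF p, of "Suc k"] p
    proof (intro equalityI subsetI)
      fix i assume "i \<in> {i\<in>{1..Suc k}. p^i dvd Suc k}"
      moreover have "\<not> is_unit p" using prime_gt_1_nat[OF p] by simp
      ultimately show "i \<in> {1..multiplicity p (Suc k)}" using multiplicity_geI[of "Suc k" p i] by auto
    next
      fix i assume "i \<in> {1..multiplicity p (Suc k)}"
      thus "i \<in> {i\<in>{1..Suc k}. p^i dvd Suc k}" using mult_le_self[OF p, of "Suc k"] multiplicity_dvd'[of i p "Suc k"] by auto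
    qed
    thus ?thesis by simp
  qed
  also have "\<dots> = (\<Sum>i\<in>{1..Suc k}. (if p^i dvd Suc k then 1 else 0))"
    by (subst sum.inter_filter[symmetric]) auto
  also have "multiplicity p (fact k :: nat) = (\<Sum>i\<in>{1..Suc k}. k div p^i)"
  proof -
    have "(2::nat) ^ Suc k \<le> p ^ Suc k" using p1 by (intro power_mono) auto
    hence "k < p ^ Suc k" using less_exp[of "Suc k"] by linarith
    hence "k div p ^ Suc k = 0" by simp
    thus ?thesis using Suc.IH by simp
  qed
  finally have "multiplicity p (fact (Suc k) :: nat) = (\<Sum>i\<in>{1..Suc k}. (if p^i dvd Suc k then 1 else 0) + k div p^i)"
    by (simp add: sum.distrib)
  also have "\<dots> = (\<Sum>i\<in>{1..Suc k}. Suc k div p^i)"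
    by (rule sum.cong[OF refl]) (use p1 in \<open>simp add: Suc_div_split\<close>)
  finally show ?case .
qed
lemma div_double:
  assumes "(d::nat) > 0"
  shows "(2*m) div d = 2*(m div d) + (2*(m mod d)) div d" "(2*(m mod d)) div d \<le> 1"
proof -
  have "2*m = 2*(m mod d) + d*(2*(m div d))"
  proof -
    have "m = m mod d + d*(m div d)" by simp
    then show ?thesis by (metis add_mult_distrib2 mult.left_commute)
  qed
  hence "(2*m) div d = (2*(m mod d) + d*(2*(m div d))) div d" by simp
  also have "\<dots> = 2*(m div d) + (2*(m mod d)) div d" using assms by (simp only: div_mult_self2)
  finally show "(2*m) div d = 2*(m div d) + (2*(m mod d)) div d" .
  have "2*(m mod d) < 2*d" using assms by simp
  hence "(2*(m mod d)) div d < 2" by (simp add: less_mult_imp_div_less)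
  thus "(2*(m mod d)) div d \<le> 1" by simp
qed

lemma div_double_le: "(d::nat) > 0 \<Longrightarrow> 2 * (m div d) \<le> (2*m) div d"
  using div_double(1)[of d m] by simp

lemma div_double_diff: "(d::nat) > 0 \<Longrightarrow> (2*m) div d - 2 * (m div d) \<le> 1"
  using div_double[of d m] by simp

lemma binom_pp_le:
  assumes p: "prime (p::nat)" and m: "m > 0"
  shows "p ^ multiplicity p ((2*m) choose m) \<le> 2*m"
proof (rule ccontr)
  let ?C = "(2*m) choose m"
  let ?v = "multiplicity p ?C"
  let ?t = "\<lambda>i. (2*m) div p^i - 2 * (m div p^i)"
  assume "\<not> ?thesis"
  hence big: "2*m < p ^ ?v" by simp
  have p1: "p > 1" using p prime_gt_1_nat by blast
  have Cnz: "?C \<noteq> 0" by simp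
  have "fact m * fact (2*m - m) * ?C = (fact (2*m) :: nat)" by (rule binomial_fact_lemma) simp
  hence "fact (2*m) = ?C * fact m * (fact m :: nat)" by (simp add: mult_ac)
  hence "multiplicity p (fact (2*m) :: nat) = ?v + multiplicity p (fact m :: nat) + multiplicity p (fact m :: nat)"
    using p Cnz by (simp add: prime_elem_multiplicity_mult_distrib)
  hence eq: "(\<Sum>i\<in>{1..2*m}. (2*m) div p^i) = ?v + 2 * (\<Sum>i\<in>{1..m}. m div p^i)"
    using legendre[OF p] by simp
  have "(\<Sum>i\<in>{1..m}. m div p^i) = (\<Sum>i\<in>{1..2*m}. m div p^i)"
  proof (rule sum.mono_neutral_left)
    show "\<forall>i\<in>{1..2*m} - {1..m}. m div p ^ i = 0"
    proof
      fix i assume "i \<in> {1..2*m} - {1..m}"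
      hence "m < i" by auto
      also have "i < 2^i" by (rule less_exp)
      also have "2^i \<le> p^i" using p1 by (intro power_mono) auto
      finally show "m div p ^ i = 0" by simp
    qed
  qed auto
  hence eq2: "(\<Sum>i\<in>{1..2*m}. (2*m) div p^i) = ?v + (\<Sum>i\<in>{1..2*m}. 2 * (m div p^i))"
    using eq by (simp add: sum_distrib_left)
  have "(\<Sum>i\<in>{1..2*m}. (2*m) div p^i) = (\<Sum>i\<in>{1..2*m}. ?t i) + (\<Sum>i\<in>{1..2*m}. 2 * (m div p^i))"
  proof (subst sum.distrib[symmetric], rule sum.cong[OF refl])
    fix i
    have "2*(m div p^i) \<le> (2*m) div p^i" using div_double_le[of "p^i" m] p1 by simp
    thus "(2*m) div p^i = ?t i + 2 * (m div p^i)" by simp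
  qed
  hence vt: "?v = (\<Sum>i\<in>{1..2*m}. ?t i)" using eq2 by simp
  define L where "L = (LEAST i. 2*m < p^i)"
  have L1: "2*m < p^L" unfolding L_def by (rule LeastI[of _ ?v]) (rule big)
  have Lv: "L \<le> ?v" unfolding L_def by (rule Least_le) (rule big)
  have "(\<Sum>i\<in>{1..2*m}. ?t i) \<le> (\<Sum>i\<in>{1..2*m}. (if i < L then 1 else 0))"
  proof (rule sum_mono)
    fix i assume "i \<in> {1..2*m}"
    show "?t i \<le> (if i < L then 1 else 0)"
    proof (cases "i < L")
      case False
      hence "p^L \<le> p^i" using p1 by (intro power_increasing) auto
      hence "2*m < p^i" using L1 by simp
      thus ?thesis using False by simp
    qed (use div_double_diff[of "p^i" m] p1 in simp)
  qed
  also have "\<dots> = card {i\<in>{1..2*m}. i < L}"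
    by (subst sum.inter_filter[symmetric]) auto
  also have "\<dots> \<le> card {1..<L}" by (rule card_mono) auto
  also have "\<dots> < L" using L1 m by (cases L) auto
  finally show False using vt Lv by simp
qed


lemma pow_step: "(k::nat) \<ge> 30 \<Longrightarrow> (k+2)^4 \<le> 2*(k+1)^4"
proof -
  assume "k \<ge> 30"
  then obtain t where "k = t + 30" by (metis add.commute le_iff_add)
  thus ?thesis by (simp add: power4_eq_xxxx algebra_simps)
qed

lemma pow_bound: "(j::nat) \<ge> 30 \<Longrightarrow> 2*(j+1)^4 < 2^j"
proof (induction j rule: dec_induct)
  case base show ?case by simp
next
  case (step k)
  have "2*(Suc k+1)^4 = 2*(k+2)^4" by simp
  also have "\<dots> \<le> 2*(2*(k+1)^4)" using pow_step[OF step(1)] by simp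
  also have "\<dots> < 2 * 2^k" using step(3) by simp
  finally show ?case by simp
qed

lemma weak_bertrand:
  fixes x j :: nat
  assumes x: "x \<ge> 1" and j: "j \<ge> 30" "j^3 \<le> x" "x < (j+1)^3"
  shows "\<exists>q. prime q \<and> x < q \<and> q \<le> 2*x*j"
proof (rule ccontr)
  assume no: "\<not> ?thesis"
  define m where "m = x*j"
  have m0: "m > 0" using x j by (simp add: m_def)
  let ?C = "(2*m) choose m"
  have Cnz: "?C \<noteq> 0" by simp
  have pfC: "prime_factors ?C \<subseteq> {1..x}"
  proof
    fix l assume l: "l \<in> prime_factors ?C"
    hence lp: "prime l" and ld: "l dvd ?C" by auto
    have "fact m * fact (2*m-m) * ?C = (fact (2*m)::nat)" by (rule binomial_fact_lemma) simp
    hence "?C dvd fact (2*m)" by (metis dvd_triv_right)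
    hence "l \<le> 2*m" using ld prime_dvd_fact_iff[OF lp] dvd_trans by blast
    hence "l \<le> x" using no lp m_def by (metis mult.assoc not_le)
    thus "l \<in> {1..x}" using lp prime_ge_1_nat by auto
  qed
  have "?C = (\<Prod>l\<in>prime_factors ?C. l ^ multiplicity l ?C)"
    using prod_prime_factors[OF Cnz] by simp
  also have "\<dots> \<le> (\<Prod>l\<in>prime_factors ?C. 2*m)"
    by (rule prod_mono) (auto intro: binom_pp_le m0)
  also have "\<dots> = (2*m) ^ card (prime_factors ?C)" by simp
  also have "\<dots> \<le> (2*m) ^ x"
  proof (rule power_increasing)
    show "card (prime_factors ?C) \<le> x" using card_mono[OF _ pfC] by simp
  qed (use m0 in auto)
  finally have Cle: "?C \<le> (2*m)^x" .
  have h: "(4::real)^m \<le> real ?C * (2 * real m)" using central_binomial_lower_bound[OF m0] m0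
    by (simp add: divide_le_eq)
  have "real (4^m) \<le> real (?C*(2*m))" using h by simp
  hence "4^m \<le> ?C * (2*m)" by (simp only: of_nat_le_iff)
  also have "\<dots> \<le> (2*m)^x * (2*m)" using Cle by simp
  also have "\<dots> = (2*m)^(x+1)" by simp
  also have "\<dots> \<le> (2*m)^(2*x)" using x m0 by (intro power_increasing) auto
  also have "\<dots> = ((2*m)^2)^x" by (simp add: power_mult)
  also have "\<dots> = ((2*x*j)^2)^x" by (simp add: m_def mult.assoc)
  finally have A: "4^m \<le> ((2*x*j)^2)^x" .
  have "2*x*j < 2*(j+1)^4"
  proof -
    have a: "2*x < 2*(j+1)^3" using j by simp
    have lt: "2*x*j < 2*(j+1)^3*(j+1)" using mult_strict_mono[OF a, of j "j+1"] by simp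
    have e: "(j+1)^(3+1) = (j+1)^3*(j+1)" by (simp only: power_add power_one_right)
    have "(j+1)^4 = (j+1)^3*(j+1)" using e by (simp only: numeral_plus_one semiring_norm)
    hence "2*(j+1)^3*(j+1) = 2*(j+1)^4" by (simp only: mult.assoc)
    thus ?thesis using lt by linarith
  qed
  hence "2*x*j < 2^j" using pow_bound[OF j(1)] by linarith
  hence sq: "(2*x*j)^2 < (2^j)^2" by (intro power_strict_mono) auto
  have "((2*x*j)^2)^x < ((2^j)^2)^x" using power_strict_mono[OF sq, of x] x by simp
  also have "((2::nat)^j)^2 = 4^j"
  proof -
    have "((2::nat)^j)^2 = 2^(j*2)" by (simp add: power_mult)
    also have "\<dots> = (2^2)^j" by (metis power_mult mult.commute)
    finally show ?thesis by simp
  qed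
  also have "((4::nat)^j)^x = 4^m" by (simp add: m_def power_mult[symmetric] mult.commute)
  finally show False using A by simp
qed


lemma S_real:
  assumes n: "n > 0" and all: "\<forall>p\<in>prime_factors n. p > r"
  shows "real_of_int (S r n) = real n * (\<Prod>p\<in>prime_factors n. 1 - real r / real p)"
proof -
  have "real_of_int (S r n) = (\<Prod>p\<in>prime_factors n. real p ^ (multiplicity p n - 1) * (real p - real r))"
    unfolding S_def of_int_prod
  proof (rule prod.cong[OF refl])
    fix p assume "p \<in> prime_factors n"
    hence "\<not> p \<le> r" using all by auto
    thus "real_of_int (if p \<le> r then 0 else int p ^ (multiplicity p n - 1) * (int p - int r)) =
      real p ^ (multiplicity p n - 1) * (real p - real r)" by simp
  qed
  also have "\<dots> = (\<Prod>p\<in>prime_factors n. real p ^ multiplicity p n * (1 - real r / real p))"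
  proof (rule prod.cong[OF refl])
    fix p assume p: "p \<in> prime_factors n"
    have pp: "real p > 0" using p by (simp add: prime_factors_gt_0_nat)
    have "multiplicity p n > 0" using p n by (simp add: prime_factors_multiplicity)
    then obtain k where k: "multiplicity p n = Suc k" by (cases "multiplicity p n") auto
    show "real p ^ (multiplicity p n - 1) * (real p - real r) = real p ^ multiplicity p n * (1 - real r / real p)"
      using pp unfolding k by (simp add: field_simps)
  qed
  also have "\<dots> = (\<Prod>p\<in>prime_factors n. real p ^ multiplicity p n) * (\<Prod>p\<in>prime_factors n. 1 - real r / real p)"
    by (rule prod.distrib)
  also have "(\<Prod>p\<in>prime_factors n. real p ^ multiplicity p n) = real (\<Prod>p\<in>prime_factors n. p ^ multiplicity p n)"
    by simp
  also have "(\<Prod>p\<in>prime_factors n. p ^ multiplicity p n) = n"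
    using prod_prime_factors[of n] n by simp
  finally show ?thesis .
qed

lemma S_pos_iff:
  assumes n: "n > 0"
  shows "S r n > 0 \<longleftrightarrow> (\<forall>p\<in>prime_factors n. p > r)"
proof
  assume pos: "S r n > 0"
  show "\<forall>p\<in>prime_factors n. p > r"
  proof (rule ccontr)
    assume "\<not> ?thesis"
    then obtain p where p: "p \<in> prime_factors n" "p \<le> r" by auto
    hence "S r n = 0" unfolding S_def by (intro prod_zero) auto
    thus False using pos by simp
  qed
next
  assume all: "\<forall>p\<in>prime_factors n. p > r"
  show "S r n > 0" unfolding S_def
    by (rule prod_pos) (use all in \<open>auto simp: prime_factors_gt_0_nat\<close>)
qed

lemma B_iff: "n \<in> B r \<longleftrightarrow> n > 0 \<and> (\<forall>p\<in>prime_factors n. p > r)"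
  unfolding B_def using S_pos_iff by auto



lemma g_le1:
  assumes "\<forall>p\<in>A. p > r" "r > 0"
  shows "(\<Prod>p\<in>A. 1 - real r / real p) \<le> 1" "(\<Prod>p\<in>A. 1 - real r / real p) \<ge> 0"
proof -
  have h: "0 \<le> 1 - real r / real p \<and> 1 - real r / real p \<le> 1" if "p \<in> A" for p
  proof -
    have "p > r" using that assms by auto
    hence "real r / real p \<le> 1" "real r / real p \<ge> 0" by (auto simp: divide_le_eq_1)
    thus ?thesis by simp
  qed
  show "(\<Prod>p\<in>A. 1 - real r / real p) \<le> 1" by (rule prod_le_1) (use h in auto)
  show "(\<Prod>p\<in>A. 1 - real r / real p) \<ge> 0" by (rule prod_nonneg) (use h in auto)
qed

lemma key:
  assumes nF: "n \<in> F r" and r0: "r > 0" and q0: "prime q0" and dv: "q0^(Suc i) dvd n"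
    and q: "prime q" "r < q" "\<not> q dvd n" and big: "q^2 * fact r < q0^i"
  shows False
proof -
  define R :: nat where "R = fact r"
  have R1: "R \<ge> 1" unfolding R_def by simp
  have nB: "n \<in> B r" using nF unfolding F_def by auto
  hence n0: "n > 0" and nall: "\<forall>p\<in>prime_factors n. p > r" using B_iff by auto
  define D where "D = q0^i"
  define n0 where "n0 = n div D"
  have Dd: "D dvd n" using dv unfolding D_def by (metis dvd_mult_left power_Suc2)
  have nn0: "n = n0 * D" using Dd unfolding n0_def by simp
  have D0: "D > 0" using q0 unfolding D_def by (simp add: prime_gt_0_nat)
  have n0pos: "n0 > 0" using nn0 n0 by (cases n0) auto
  have q0n0: "q0 dvd n0"
  proof -
    have "q0 * D dvd n0 * D" using dv nn0 unfolding D_def by (simp add: mult.commute)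
    thus ?thesis using D0 by simp
  qed
  have pfD: "prime_factors D \<subseteq> {q0}"
  proof
    fix l assume "l \<in> prime_factors D"
    hence "prime l" "l dvd q0^i" unfolding D_def by (auto simp: in_prime_factors_iff)
    hence "l dvd q0" using prime_dvd_power by blast
    thus "l \<in> {q0}" using \<open>prime l\<close> q0 primes_dvd_imp_eq by blast
  qed
  have pfn: "prime_factors n = prime_factors n0"
  proof -
    have "prime_factors n = prime_factors n0 \<union> prime_factors D"
      using nn0 n0pos D0 by (simp add: prime_factors_product)
    moreover have "q0 \<in> prime_factors n0" using q0 q0n0 n0pos by (auto simp: in_prime_factors_iff)
    ultimately show ?thesis using pfD by auto
  qed
  define d where "d = q - r"
  have d0: "d > 0" and qd: "q = d + r" using q unfolding d_def by auto
  define U where "U = D div d"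
  have UD: "U * d \<le> D" unfolding U_def using div_times_less_eq_dividend[of D d] by simp
  have DU: "D < (U+1) * d"
  proof -
    have "D = d * U + D mod d" unfolding U_def by simp
    moreover have "D mod d < d" using d0 by simp
    ultimately show ?thesis by (simp add: algebra_simps)
  qed
  have bigR: "q*(q*R) < D" using big unfolding R_def D_def by (simp add: power2_eq_square mult.assoc)
  have a1: "d * (q*R) \<le> q*(q*R)" using qd by simp
  have "(q*R) * d < (U+1)*d" using a1 bigR DU by (simp only: mult.commute[of d])
  hence UqR: "q*R < U+1" using mult_less_cancel2 by blast
  have q2: "q \<ge> 2" using q prime_ge_2_nat by blast
  have "q*R \<ge> q" using R1 by simp
  hence U1: "U \<ge> 1" using UqR q2 by linarith
  define k where "k = (U-1) div R"
  define w where "w = 1 + R * k"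
  have k1: "R * k \<le> U - 1" using div_times_less_eq_dividend[of "U-1" R] unfolding k_def by (simp add: mult.commute)
  have wU: "w \<le> U" unfolding w_def using k1 U1 by linarith
  have wR: "U < w + R"
  proof -
    have e: "U - 1 = R * k + (U-1) mod R" unfolding k_def by simp
    have "(U-1) mod R < R" using R1 by simp
    thus ?thesis unfolding w_def using e U1 by linarith
  qed
  have wd: "w * d \<le> D" using wU UD by (meson le_trans mult_le_mono1)
  have qw: "D < q * w"
  proof -
    have "q * (U+1) \<le> q * (w + R)" using wR by (intro mult_le_mono2) simp
    moreover have "q * (U+1) = (U+1)*d + r*(U+1)" using qd by (simp add: algebra_simps)
    moreover have "U+1 \<le> r*(U+1)" using mult_le_mono1[OF Suc_leI[OF r0], of "U+1"] by (metis mult_1 One_nat_def)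
    moreover have "q*(w+R) = q*w + q*R" by (simp add: algebra_simps)
    ultimately show ?thesis using DU UqR by linarith
  qed
  have pfw: "\<forall>l\<in>prime_factors w. l > r"
  proof
    fix l assume l: "l \<in> prime_factors w"
    show "l > r"
    proof (rule ccontr)
      assume "\<not> l > r"
      hence "l dvd R" unfolding R_def using l by (intro dvd_fact) (auto simp: prime_ge_1_nat in_prime_factors_iff)
      hence "l dvd R * k" by simp
      moreover have "l dvd w" using l by (auto simp: in_prime_factors_iff)
      ultimately have "l dvd 1" unfolding w_def by (metis add.commute dvd_add_right_iff)
      thus False using l by (auto simp: in_prime_factors_iff)
    qed
  qed
  have w0: "w > 0" unfolding w_def by simp
  define m where "m = n0 * q * w"
  have m0: "m > 0" unfolding m_def using n0pos w0 q2 by simp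
  have pfm: "prime_factors m = prime_factors n \<union> {q} \<union> prime_factors w"
    unfolding m_def using n0pos w0 q pfn by (simp add: prime_factors_product prime_prime_factors)
  have mall: "\<forall>p\<in>prime_factors m. p > r" using pfm nall pfw q by auto
  have mB: "m \<in> B r" using B_iff m0 mall by auto
  have mn: "m > n" unfolding m_def using nn0 qw n0pos by (simp add: mult.assoc)
  hence lt: "S r n < S r m" using nF mB unfolding F_def by auto
  let ?g = "\<lambda>A. (\<Prod>p\<in>A. 1 - real r / real p)"
  have qn: "q \<notin> prime_factors n" using q by (auto simp: in_prime_factors_iff)
  have gm: "?g (prime_factors m) \<le> (1 - real r / real q) * ?g (prime_factors n)"
  proof -
    let ?A = "insert q (prime_factors n)"
    have sub: "?A \<subseteq> prime_factors m" using pfm by auto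
    have "?g (prime_factors m) = ?g (prime_factors m - ?A) * ?g ?A"
      by (rule prod.subset_diff[OF sub]) simp
    also have "\<dots> \<le> 1 * ?g ?A"
      by (rule mult_right_mono) (use g_le1[of ?A r] g_le1[of "prime_factors m - ?A" r] mall nall q r0 in auto)
    also have "?g ?A = (1 - real r / real q) * ?g (prime_factors n)"
      using qn by (simp add: prod.insert)
    finally show ?thesis by simp
  qed
  have "real_of_int (S r m) = real m * ?g (prime_factors m)" using S_real m0 mall by blast
  also have "\<dots> \<le> real m * ((1 - real r / real q) * ?g (prime_factors n))"
    using gm by (intro mult_left_mono) auto
  also have "real m * (1 - real r / real q) = real n0 * real w * real d"
  proof -
    have "real q > 0" using q2 by simp
    thus ?thesis unfolding m_def using qd by (simp add: field_simps)
  qed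
  hence "real m * ((1 - real r / real q) * ?g (prime_factors n)) = real n0 * real (w * d) * ?g (prime_factors n)"
    by (simp add: mult.assoc[symmetric])
  also have "\<dots> \<le> real n0 * real D * ?g (prime_factors n)"
  proof -
    have wdr: "real w * real d \<le> real D" using wd by (metis of_nat_le_iff of_nat_mult)
    show ?thesis
      using wdr g_le1(2)[of "prime_factors n" r] nall r0 by (intro mult_right_mono mult_left_mono) auto
  qed
  also have "\<dots> = real_of_int (S r n)" using S_real[OF n0 nall] nn0 by simp
  finally show False using lt by linarith
qed



lemma cube_root_ex: "\<exists>j::nat. j^3 \<le> x \<and> x < (j+1)^3"
proof -
  have ex: "\<exists>k. x < (k+1)^3"
  proof
    have "x < x + 1" by simp
    also have "x + 1 \<le> (x+1)^3" by (simp add: self_le_power)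
    finally show "x < (x+1)^3" .
  qed
  define k where "k = (LEAST k. x < (k+1)^3)"
  have k1: "x < (k+1)^3" unfolding k_def by (rule LeastI_ex[OF ex])
  have k2: "k^3 \<le> x"
  proof (cases k)
    case (Suc k')
    have "\<not> x < (k'+1)^3"
    proof
      assume "x < (k'+1)^3"
      hence "k \<le> k'" unfolding k_def by (rule Least_le)
      thus False using Suc by simp
    qed
    thus ?thesis using Suc by simp
  qed simp
  show ?thesis using k1 k2 by blast
qed

theorem corollary3p2:
  fixes r :: nat
  assumes "r > 0"
  shows "\<exists>N. \<forall>n \<in> F r. n \<ge> N \<longrightarrow> \<not> (P1 n ^ 4 dvd n)"
proof -
  have r0: "r > 0" by fact
  define R :: nat where "R = fact r"
  have R1: "R \<ge> 1" unfolding R_def by simp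
  have rR: "r \<le> R" unfolding R_def by (rule fact_ge_self)
  define J where "J = 4*R + 30"
  define K where "K = J^3"
  have JK: "J \<le> K" unfolding K_def J_def by (simp add: self_le_power)
  obtain Q where Q: "prime Q" "K < Q" using bigger_prime by blast
  define T where "T = K * Q^2 * R + 1"
  have T1: "T \<ge> 1" unfolding T_def by simp
  define N where "N = T^K + 2"
  show ?thesis
  proof (intro exI[of _ N] ballI impI notI)
    fix n assume nF: "n \<in> F r" and nN: "N \<le> n" and dv: "P1 n ^ 4 dvd n"
    have nB: "n \<in> B r" using nF unfolding F_def by auto
    hence nall: "\<forall>p\<in>prime_factors n. p > r" using B_iff by auto
    have n2: "n \<ge> 2" using nN unfolding N_def by simp
    have fin: "finite (prime_factors n)" by simp
    obtain p0 where "prime p0" "p0 dvd n" using prime_factor_nat[of n] n2 by auto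
    hence "p0 \<in> prime_factors n" using n2 by (auto simp: in_prime_factors_iff)
    hence ne: "prime_factors n \<noteq> {}" by blast
    define p where "p = P1 n"
    have pdef: "p = Max (prime_factors n)" unfolding p_def P1_def using n2 by simp
    have pin: "p \<in> prime_factors n" unfolding pdef using fin ne by (rule Max_in)
    have pmax: "\<forall>l\<in>prime_factors n. l \<le> p" unfolding pdef using fin by auto
    have pp: "prime p" using pin by (auto simp: in_prime_factors_iff)
    have pr: "p > r" using pin nall by auto
    have dv4: "p ^ Suc 3 dvd n" using dv unfolding p_def by simp
    show False
    proof (cases "K \<le> p")
      case True
      obtain j where j: "j^3 \<le> p" "p < (j+1)^3" using cube_root_ex by blast
      have jJ: "J \<le> j"
      proof (rule ccontr)
        assume "\<not> J \<le> j"
        hence "j + 1 \<le> J" by simp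
        hence "(j+1)^3 \<le> J^3" by (rule power_mono) simp
        thus False using j(2) True unfolding K_def by linarith
      qed
      have p1: "p \<ge> 1" using pp prime_ge_1_nat by blast
      obtain q where q: "prime q" "p < q" "q \<le> 2*p*j"
        using weak_bertrand[OF p1 _ j] jJ unfolding J_def by auto
      have qn: "\<not> q dvd n"
      proof
        assume "q dvd n"
        hence "q \<in> prime_factors n" using q n2 by (auto simp: in_prime_factors_iff)
        thus False using pmax q by force
      qed
      have "4*R*j^2 < j*j^2" using jJ unfolding J_def by (intro mult_strict_right_mono) auto
      also have "j*j^2 = j^3" by (simp add: power2_eq_square power3_eq_cube)
      finally have h1: "4*R*j^2 < p" using j by linarith
      have "q^2*R \<le> (2*p*j)^2*R" using q by (intro mult_right_mono power_mono) auto
      also have "(2*p*j)^2*R = p^2*(4*R*j^2)" by (simp add: power_mult_distrib algebra_simps)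
      also have "p^2*(4*R*j^2) < p^2*p" using h1 pp prime_gt_0_nat by (intro mult_strict_left_mono) auto
      also have "p^2*p = p^3" by (simp add: power2_eq_square power3_eq_cube)
      finally have big: "q^2 * fact r < p^3" unfolding R_def .
      show False using key[OF nF r0 pp dv4 q(1) _ qn big] q pr by linarith
    next
      case False
      have small: "\<forall>l\<in>prime_factors n. l < K" using pmax False by force
      have "\<exists>l\<in>prime_factors n. T < l ^ multiplicity l n"
      proof (rule ccontr)
        assume "\<not> ?thesis"
        hence le: "\<forall>l\<in>prime_factors n. l ^ multiplicity l n \<le> T" by auto
        have "n = (\<Prod>l\<in>prime_factors n. l ^ multiplicity l n)"
          using prod_prime_factors[of n] n2 by simp
        also have "\<dots> \<le> (\<Prod>l\<in>prime_factors n. T)" by (rule prod_mono) (use le in auto)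
        also have "\<dots> = T ^ card (prime_factors n)" by simp
        also have "\<dots> \<le> T ^ K"
        proof (rule power_increasing)
          have "prime_factors n \<subseteq> {..<K}" using small by auto
          hence "card (prime_factors n) \<le> card {..<K}" by (rule card_mono[rotated]) simp
          thus "card (prime_factors n) \<le> K" by simp
        qed (use T1 in simp)
        finally show False using nN unfolding N_def by simp
      qed
      then obtain l where l: "l \<in> prime_factors n" "T < l ^ multiplicity l n" by blast
      define e where "e = multiplicity l n"
      have e0: "e \<noteq> 0" using l T1 unfolding e_def by (cases "multiplicity l n") auto
      have lp: "prime l" using l by (auto simp: in_prime_factors_iff)
      have dvl: "l ^ Suc (e - 1) dvd n" using e0 multiplicity_dvd[of l n] unfolding e_def by simp
      have lK: "l < K" using small l by auto
      have "T < l^(e-1) * l" using l e0 unfolding e_def by (metis Suc_diff_1 not_gr0 power_Suc2)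
      also have "\<dots> \<le> l^(e-1) * K" using lK by simp
      finally have a: "T < l^(e-1) * K" .
      have b: "(Q^2*R)*K < T" unfolding T_def by (simp add: mult.commute mult.left_commute)
      have "(Q^2*R)*K < l^(e-1) * K" using a b by linarith
      hence "Q^2*R < l^(e-1)" using mult_less_cancel2 by blast
      hence big: "Q^2 * fact r < l^(e-1)" unfolding R_def .
      have Qn: "\<not> Q dvd n"
      proof
        assume "Q dvd n"
        hence "Q \<in> prime_factors n" using Q n2 by (auto simp: in_prime_factors_iff)
        thus False using small Q by force
      qed
      have "r < Q" using rR JK Q unfolding J_def by linarith
      thus False using key[OF nF r0 lp dvl Q(1) _ Qn big] by simp
    qed
  qed
qed


end
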